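(* Let $\alpha,\beta$ be propositional formulas, $V=V(\alpha)\cup V(\beta)$, and let $B_1,\dots,B_n$ enumerate $V(\beta)\setminus V(\alpha)$. If $\alpha\mathbin{|\!\sim}_{cw}\beta$, then there is a formula $\gamma$ with $V(\gamma)\subseteq V(\alpha)\cap V(\beta)$ such that $\alpha\mathbin{|\!\sim}_{cw}\gamma$ and $\gamma\land\neg B_1\land\dots\land\neg B_n\models\beta$ (in $\mathbf{HT}$). In particular $\gamma\mathbin{|\!\sim}_{cw}\beta$.
   Context: $V(\varphi)$ is the set of atoms of $\varphi$. Here-and-there logic $\mathbf{HT}(V)$ over atom set $V$: interpretations are pairs $\langle H,T\rangle$, $H\subseteq T\subseteq V$, viewed as two-world Kripke models ($h\le t$; atoms true at $h$: $H$, at $t$: $T$) with intuitionistic Kripke clauses, $\neg\varphi:=\varphi\to\bot$; $\mathcal M\models\varphi$ iff $\varphi$ true at both worlds; $\Pi\models\varphi$ (equivalently $\Pi\vdash\varphi$) iff every model of $\Pi$ is a model of $\varphi$. An equilibrium model of $\Pi$ over $V$ is a model $\langle T,T\rangle$ of $\Pi$ in $\mathbf{HT}(V)$ with no model $\langle H,T\rangle$ of $\Pi$ with $H\subsetneq T$; $E_V(\Pi)$ is the set of these. Closed-world equilibrium entailment: if $\Pi$ is non-empty and has equilibrium models, $\Pi\mathbin{|\!\sim}_{cw}\varphi$ iff $\mathcal M\models\varphi$ for every $\mathcal M\in E_{V(\Pi)\cup V(\varphi)}(\Pi)$; otherwise $\Pi\mathbin{|\!\sim}_{cw}\varphi$ iff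 $\Pi\vdash\varphi$ in $\mathbf{HT}$. A formula $\alpha$ is identified with $\{\alpha\}$. *)

theory Defs
  imports Main
begin

datatype 'a form = Atom 'a | Bot | Conj "'a form" "'a form" | Disj "'a form" "'a form"
  | Imp "'a form" "'a form"

definition Neg :: "'a form \<Rightarrow> 'a form" where
  "Neg \<phi> = Imp \<phi> Bot"

fun atoms :: "'a form \<Rightarrow> 'a set" where
  "atoms (Atom p) = {p}"
| "atoms Bot = {}"
| "atoms (Conj a b) = atoms a \<union> atoms b"
| "atoms (Disj a b) = atoms a \<union> atoms b"
| "atoms (Imp a b) = atoms a \<union> atoms b"

definition atoms_set :: "'a form set \<Rightarrow> 'a set" where
  "atoms_set \<Pi> = (\<Union>\<psi>\<in>\<Pi>. atoms \<psi>)"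

fun tsat :: "'a set \<Rightarrow> 'a form \<Rightarrow> bool" where
  "tsat T (Atom p) = (p \<in> T)"
| "tsat T Bot = False"
| "tsat T (Conj a b) = (tsat T a \<and> tsat T b)"
| "tsat T (Disj a b) = (tsat T a \<or> tsat T b)"
| "tsat T (Imp a b) = (tsat T a \<longrightarrow> tsat T b)"

text \<open>Truth at world h (atoms H), with h below t (intuitionistic Kripke clauses).\<close>
fun hsat :: "'a set \<Rightarrow> 'a set \<Rightarrow> 'a form \<Rightarrow> bool" where
  "hsat H T (Atom p) = (p \<in> H)"
| "hsat H T Bot = False"
| "hsat H T (Conj a b) = (hsat H T a \<and> hsat H T b)"
| "hsat H T (Disj a b) = (hsat H T a \<or> hsat H T b)"
| "hsat H T (Imp a b) = ((hsat H T a \<longrightarrow> hsat H T b) \<and> (tsat T a \<longrightarrow> tsat T b))"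

definition ht_models :: "'a set \<Rightarrow> 'a set \<Rightarrow> 'a form \<Rightarrow> bool" where
  "ht_models H T \<phi> = (hsat H T \<phi> \<and> tsat T \<phi>)"

definition ht_models_set :: "'a set \<Rightarrow> 'a set \<Rightarrow> 'a form set \<Rightarrow> bool" where
  "ht_models_set H T \<Pi> = (\<forall>\<psi>\<in>\<Pi>. ht_models H T \<psi>)"

definition ht_entails :: "'a form set \<Rightarrow> 'a form \<Rightarrow> bool" where
  "ht_entails \<Pi> \<phi> = (\<forall>H T. H \<subseteq> T \<and> T \<subseteq> atoms_set \<Pi> \<union> atoms \<phi> \<longrightarrow>
      ht_models_set H T \<Pi> \<longrightarrow> ht_models H T \<phi>)"

text \<open>Equilibrium models of Pi over V (identified by their T component: <T,T>).\<close>
definition equilibrium_model :: "'a set \<Rightarrow> 'a form set \<Rightarrow> 'a set \<Rightarrow> bool" where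
  "equilibrium_model V \<Pi> T = (T \<subseteq> V \<and> ht_models_set T T \<Pi> \<and>
      \<not> (\<exists>H. H \<subset> T \<and> ht_models_set H T \<Pi>))"

definition cw_entails :: "'a form set \<Rightarrow> 'a form \<Rightarrow> bool" where
  "cw_entails \<Pi> \<phi> =
    (if \<Pi> \<noteq> {} \<and> (\<exists>T. equilibrium_model (atoms_set \<Pi> \<union> atoms \<phi>) \<Pi> T)
     then (\<forall>T. equilibrium_model (atoms_set \<Pi> \<union> atoms \<phi>) \<Pi> T \<longrightarrow> ht_models T T \<phi>)
     else ht_entails \<Pi> \<phi>)"

definition conj_negs :: "'a form \<Rightarrow> 'a list \<Rightarrow> 'a form" where
  "conj_negs \<gamma> Bs = foldl (\<lambda>acc b. Conj acc (Neg (Atom b))) \<gamma> Bs"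

end

theory Submission
  imports Defs
begin

lemma finite_atoms: "finite (atoms \<phi>)"
  by (induction \<phi>) auto

lemma local_sat:
  "atoms \<phi> \<subseteq> A \<Longrightarrow> H \<inter> A = H' \<inter> A \<Longrightarrow> T \<inter> A = T' \<inter> A \<Longrightarrow>
   (hsat H T \<phi> = hsat H' T' \<phi>) \<and> (tsat T \<phi> = tsat T' \<phi>)"
  by (induction \<phi>) (auto simp: set_eq_iff)

lemma hsat_TT: "hsat T T \<phi> = tsat T \<phi>"
  by (induction \<phi>) auto

lemma persist: "H \<subseteq> T \<Longrightarrow> hsat H T \<phi> \<Longrightarrow> tsat T \<phi>"
  by (induction \<phi>) auto

definition sem :: "'a form \<Rightarrow> 'a form \<Rightarrow> bool" where
  "sem \<phi> \<psi> = (\<forall>H T. H \<subseteq> T \<longrightarrow> ht_models H T \<phi> \<longrightarrow> ht_models H T \<psi>)"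

lemma ht_entails_sem: "ht_entails {\<phi>} \<psi> = sem \<phi> \<psi>"
proof
  assume a: "ht_entails {\<phi>} \<psi>"
  show "sem \<phi> \<psi>" unfolding sem_def
  proof (intro allI impI)
    fix H T assume HT: "(H::'a set) \<subseteq> T" and m: "ht_models H T \<phi>"
    define A where "A = atoms \<phi> \<union> atoms \<psi>"
    have l1: "ht_models H T \<phi> = ht_models (H \<inter> A) (T \<inter> A) \<phi>"
      using local_sat[of \<phi> A H "H \<inter> A" T "T \<inter> A"] unfolding A_def ht_models_def by auto
    have l2: "ht_models H T \<psi> = ht_models (H \<inter> A) (T \<inter> A) \<psi>"
      using local_sat[of \<psi> A H "H \<inter> A" T "T \<inter> A"] unfolding A_def ht_models_def by auto
    have s: "H \<inter> A \<subseteq> T \<inter> A" "T \<inter> A \<subseteq> atoms \<phi> \<union> atoms \<psi>" using HT unfolding A_def by auto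
    have "ht_models (H \<inter> A) (T \<inter> A) \<psi>"
      using a s m l1 unfolding ht_entails_def ht_models_set_def atoms_set_def by blast
    then show "ht_models H T \<psi>" using l2 by simp
  qed
next
  assume "sem \<phi> \<psi>" then show "ht_entails {\<phi>} \<psi>"
    unfolding sem_def ht_entails_def ht_models_set_def by auto
qed

lemma eq_sub: "equilibrium_model V {\<phi>} T \<Longrightarrow> T \<subseteq> atoms \<phi>"
proof (rule ccontr)
  assume e: "equilibrium_model V {\<phi>} T" and n: "\<not> T \<subseteq> atoms \<phi>"
  have "ht_models (T \<inter> atoms \<phi>) T \<phi> = ht_models T T \<phi>"
    using local_sat[of \<phi> "atoms \<phi>" "T \<inter> atoms \<phi>" T T T] unfolding ht_models_def by auto
  moreover have "T \<inter> atoms \<phi> \<subset> T" using n by auto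
  ultimately show False using e unfolding equilibrium_model_def ht_models_set_def by auto
qed

lemma eq_change: "equilibrium_model V {\<phi>} T \<Longrightarrow> atoms \<phi> \<subseteq> V' \<Longrightarrow> equilibrium_model V' {\<phi>} T"
  using eq_sub[of V \<phi> T] unfolding equilibrium_model_def by auto

lemma conj_negs_sat:
  "hsat H T (conj_negs \<gamma> Bs) = (hsat H T \<gamma> \<and> (\<forall>b\<in>set Bs. b \<notin> H \<and> b \<notin> T))
   \<and> tsat T (conj_negs \<gamma> Bs) = (tsat T \<gamma> \<and> (\<forall>b\<in>set Bs. b \<notin> T))"
  unfolding conj_negs_def
  by (induction Bs arbitrary: \<gamma>) (auto simp: Neg_def)

definition bigConj :: "'a form list \<Rightarrow> 'a form" where
  "bigConj xs = foldr Conj xs (Neg Bot)"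
definition bigDisj :: "'a form list \<Rightarrow> 'a form" where
  "bigDisj xs = foldr Disj xs Bot"

lemma bigConj_sat: "hsat H T (bigConj xs) = (\<forall>x\<in>set xs. hsat H T x)
   \<and> tsat T (bigConj xs) = (\<forall>x\<in>set xs. tsat T x)
   \<and> atoms (bigConj xs) = (\<Union>x\<in>set xs. atoms x)"
  unfolding bigConj_def by (induction xs) (auto simp: Neg_def)

lemma bigDisj_sat: "hsat H T (bigDisj xs) = (\<exists>x\<in>set xs. hsat H T x)
   \<and> tsat T (bigDisj xs) = (\<exists>x\<in>set xs. tsat T x)
   \<and> atoms (bigDisj xs) = (\<Union>x\<in>set xs. atoms x)"
  unfolding bigDisj_def by (induction xs) auto

definition lst :: "'b set \<Rightarrow> 'b list" where
  "lst S = (SOME xs. set xs = S)"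

lemma set_lst: "finite S \<Longrightarrow> set (lst S) = S"
  unfolding lst_def by (metis (mono_tags, lifting) finite_list someI_ex)

definition psi :: "'a set \<Rightarrow> 'a set \<Rightarrow> 'a set \<Rightarrow> 'a form" where
  "psi C H T = Imp (bigConj (map Atom (lst H) @ map (\<lambda>q. Neg (Atom q)) (lst (C - T))
      @ map (\<lambda>p. Neg (Neg (Atom p))) (lst (T - H)))) (bigDisj (map Atom (lst (T - H))))"

lemma psi_atoms: "finite C \<Longrightarrow> H \<subseteq> T \<Longrightarrow> T \<subseteq> C \<Longrightarrow> atoms (psi C H T) \<subseteq> C"
  using finite_subset[of H C] finite_subset[of T C]
  by (auto simp: psi_def bigConj_sat bigDisj_sat set_lst Neg_def)

lemma psi_sat: assumes "finite C" "H \<subseteq> T" "T \<subseteq> C" "H' \<subseteq> T'"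
  shows "ht_models H' T' (psi C H T) = (\<not> (T' \<inter> C = T \<and> (H = T \<or> H' \<inter> C = H)))"
proof -
  have fH: "finite H" "finite T" using assms by (meson finite_subset)+
  define ant where "ant = bigConj (map Atom (lst H) @ map (\<lambda>q. Neg (Atom q)) (lst (C - T))
      @ map (\<lambda>p. Neg (Neg (Atom p))) (lst (T - H)))"
  have ta: "tsat T' ant = (H \<subseteq> T' \<and> (C - T) \<inter> T' = {} \<and> T - H \<subseteq> T')"
    unfolding ant_def using assms fH by (simp add: bigConj_sat set_lst Neg_def ball_Un) blast
  have ha: "hsat H' T' ant = (H \<subseteq> H' \<and> (C - T) \<inter> T' = {} \<and> T - H \<subseteq> T')"
    unfolding ant_def using assms fH by (simp add: bigConj_sat set_lst Neg_def ball_Un) blast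
  have tc: "tsat T' (bigDisj (map Atom (lst (T - H)))) = ((T - H) \<inter> T' \<noteq> {})"
    using fH by (simp add: bigDisj_sat set_lst) blast
  have hc: "hsat H' T' (bigDisj (map Atom (lst (T - H)))) = ((T - H) \<inter> H' \<noteq> {})"
    using fH by (simp add: bigDisj_sat set_lst) blast
  have p: "psi C H T = Imp ant (bigDisj (map Atom (lst (T - H))))"
    unfolding psi_def ant_def ..
  have e1: "(H \<subseteq> T' \<and> (C - T) \<inter> T' = {} \<and> T - H \<subseteq> T') = (T' \<inter> C = T)"
    using assms by blast
  have e2: "(H \<subseteq> H' \<and> (C - T) \<inter> T' = {} \<and> T - H \<subseteq> T') = (T' \<inter> C = T \<and> H \<subseteq> H')"
    using assms by blast
  show ?thesis unfolding ht_models_def p hsat.simps tsat.simps ta ha tc hc e1 e2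
    using assms by blast
qed

lemma definable:
  assumes C: "finite C" and Msub: "\<And>H T. (H, T) \<in> M \<Longrightarrow> H \<subseteq> T \<and> T \<subseteq> C"
    and Mcl: "\<And>H T. (H, T) \<in> M \<Longrightarrow> (T, T) \<in> M"
  shows "\<exists>\<gamma>. atoms \<gamma> \<subseteq> C \<and> (\<forall>H' T'. H' \<subseteq> T' \<longrightarrow> ht_models H' T' \<gamma> = ((H' \<inter> C, T' \<inter> C) \<in> M))"
proof -
  define N where "N = {(H, T). H \<subseteq> T \<and> T \<subseteq> C \<and> (H, T) \<notin> M}"
  have fN: "finite N"
    by (rule finite_subset[of _ "Pow C \<times> Pow C"]) (auto simp: N_def C)
  define \<gamma> where "\<gamma> = bigConj (map (\<lambda>(H, T). psi C H T) (lst N))"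
  have "atoms \<gamma> \<subseteq> C"
    unfolding \<gamma>_def using fN psi_atoms[OF C] by (auto simp: bigConj_sat set_lst N_def)
  moreover have "\<forall>H' T'. H' \<subseteq> T' \<longrightarrow> ht_models H' T' \<gamma> = ((H' \<inter> C, T' \<inter> C) \<in> M)"
  proof (intro allI impI)
    fix H' T' assume HT: "(H'::'a set) \<subseteq> T'"
    have "ht_models H' T' \<gamma> = (\<forall>(H, T)\<in>N. ht_models H' T' (psi C H T))"
      unfolding \<gamma>_def ht_models_def using fN by (auto simp: bigConj_sat set_lst)
    also have "\<dots> = (\<forall>(H, T)\<in>N. \<not> (T' \<inter> C = T \<and> (H = T \<or> H' \<inter> C = H)))"
      using psi_sat[OF C _ _ HT] by (auto simp: N_def)
    also have "\<dots> = ((H' \<inter> C, T' \<inter> C) \<in> M)"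
    proof
      assume a: "\<forall>(H, T)\<in>N. \<not> (T' \<inter> C = T \<and> (H = T \<or> H' \<inter> C = H))"
      show "(H' \<inter> C, T' \<inter> C) \<in> M"
      proof (rule ccontr)
        assume "(H' \<inter> C, T' \<inter> C) \<notin> M"
        then have "(H' \<inter> C, T' \<inter> C) \<in> N" using HT by (auto simp: N_def)
        then show False using a by auto
      qed
    next
      assume m: "(H' \<inter> C, T' \<inter> C) \<in> M"
      show "\<forall>(H, T)\<in>N. \<not> (T' \<inter> C = T \<and> (H = T \<or> H' \<inter> C = H))"
        using m Mcl[OF m] by (auto simp: N_def)
    qed
    finally show "ht_models H' T' \<gamma> = ((H' \<inter> C, T' \<inter> C) \<in> M)" .
  qed
  ultimately show ?thesis by blast
qed

lemma sem_cw: "sem \<gamma> \<beta> \<Longrightarrow> cw_entails {\<gamma>} \<beta>"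
  unfolding cw_entails_def using ht_entails_sem[of \<gamma> \<beta>]
  by (auto simp: sem_def equilibrium_model_def ht_models_set_def)

lemma sem_conj_negs: "sem \<gamma> \<beta> \<Longrightarrow> ht_entails {conj_negs \<gamma> Bs} \<beta>"
  unfolding ht_entails_sem sem_def ht_models_def using conj_negs_sat by metis

theorem proposition4:
  fixes \<alpha> \<beta> :: "'a form" and Bs :: "'a list"
  assumes "distinct Bs" and "set Bs = atoms \<beta> - atoms \<alpha>"
    and "cw_entails {\<alpha>} \<beta>"
  shows "\<exists>\<gamma>. atoms \<gamma> \<subseteq> atoms \<alpha> \<inter> atoms \<beta> \<and> cw_entails {\<alpha>} \<gamma>
           \<and> ht_entails {conj_negs \<gamma> Bs} \<beta> \<and> cw_entails {\<gamma>} \<beta>"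
proof -
  define C where "C = atoms \<alpha> \<inter> atoms \<beta>"
  have fC: "finite C" unfolding C_def using finite_atoms by blast
  have aS: "atoms_set {\<phi>} = atoms \<phi>" for \<phi> :: "'a form" by (simp add: atoms_set_def)
  have loc: "ht_models H T \<phi> = ht_models H' T' \<phi>"
    if "atoms \<phi> \<subseteq> A" "H \<inter> A = H' \<inter> A" "T \<inter> A = T' \<inter> A" for \<phi> A and H T H' T' :: "'a set"
    using local_sat[OF that] unfolding ht_models_def by simp
  show ?thesis
  proof (cases "\<exists>T. equilibrium_model (atoms \<alpha> \<union> atoms \<beta>) {\<alpha>} T")
    case True
    then obtain T0 where T0: "equilibrium_model (atoms \<alpha> \<union> atoms \<beta>) {\<alpha>} T0" by blast
    have Eb: "ht_models T T \<beta>" if "equilibrium_model (atoms \<alpha> \<union> atoms \<beta>) {\<alpha>} T" for T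
      using assms(3) True that unfolding cw_entails_def aS by auto
    define M where "M = {(S, S) | S. S \<subseteq> C \<and> tsat S \<beta>}"
    obtain \<gamma> where g1: "atoms \<gamma> \<subseteq> C"
      and g2: "\<And>H' T'. H' \<subseteq> T' \<Longrightarrow> ht_models H' T' \<gamma> = ((H' \<inter> C, T' \<inter> C) \<in> M)"
      using definable[OF fC, of M] unfolding M_def by (smt (verit) mem_Collect_eq prod.inject order_refl)
    have tsC: "tsat (T \<inter> C) \<beta> = tsat T \<beta>" if "T \<subseteq> atoms \<alpha>" for T
      using local_sat[of \<beta> "atoms \<beta>" "T \<inter> C" T "T \<inter> C" T] that unfolding C_def by auto
    have c1: "cw_entails {\<alpha>} \<gamma>"
    proof -
      have ex: "\<exists>T. equilibrium_model (atoms \<alpha> \<union> atoms \<gamma>) {\<alpha>} T"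
        using eq_change[OF T0] by blast
      have "ht_models T T \<gamma>" if e: "equilibrium_model (atoms \<alpha> \<union> atoms \<gamma>) {\<alpha>} T" for T
      proof -
        have sub: "T \<subseteq> atoms \<alpha>" using eq_sub[OF e] .
        have "ht_models T T \<beta>" using Eb eq_change[OF e] by blast
        then have "tsat T \<beta>" unfolding ht_models_def by simp
        then have "tsat (T \<inter> C) \<beta>" using tsC[OF sub] by simp
        then show ?thesis using g2[of T T] by (auto simp: M_def)
      qed
      then show ?thesis using ex unfolding cw_entails_def aS by auto
    qed
    have c2: "ht_entails {conj_negs \<gamma> Bs} \<beta>"
      unfolding ht_entails_sem sem_def
    proof (intro allI impI)
      fix H T :: "'a set" assume HT: "H \<subseteq> T" and m: "ht_models H T (conj_negs \<gamma> Bs)"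
      have mg: "ht_models H T \<gamma>" and nb: "\<forall>b\<in>set Bs. b \<notin> H \<and> b \<notin> T"
        using m conj_negs_sat unfolding ht_models_def by metis+
      have "(H \<inter> C, T \<inter> C) \<in> M" using g2[OF HT] mg by simp
      then obtain S where S: "H \<inter> C = S" "T \<inter> C = S" "S \<subseteq> C" "tsat S \<beta>" by (auto simp: M_def)
      have ag: "H \<inter> atoms \<beta> = S \<inter> atoms \<beta>" "T \<inter> atoms \<beta> = S \<inter> atoms \<beta>"
        using S nb assms(2) unfolding C_def by blast+
      have "ht_models S S \<beta>" using S(4) unfolding ht_models_def hsat_TT by simp
      then show "ht_models H T \<beta>" using loc[of \<beta> "atoms \<beta>" H S T S] ag by simp
    qed
    have c3: "cw_entails {\<gamma>} \<beta>"
    proof -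
      define S where "S = T0 \<inter> C"
      have sub0: "T0 \<subseteq> atoms \<alpha>" using eq_sub[OF T0] .
      have tS: "tsat S \<beta>" using Eb[OF T0] tsC[OF sub0] unfolding S_def ht_models_def by simp
      have SC: "S \<subseteq> C" unfolding S_def by blast
      have eqS: "equilibrium_model (atoms \<gamma> \<union> atoms \<beta>) {\<gamma>} S"
        unfolding equilibrium_model_def ht_models_set_def
      proof (intro conjI)
        show "S \<subseteq> atoms \<gamma> \<union> atoms \<beta>" using SC unfolding C_def by blast
        have "S \<inter> C = S" using SC by blast
        then show "\<forall>\<psi>\<in>{\<gamma>}. ht_models S S \<psi>" using g2[of S S] tS SC by (auto simp: M_def)
        show "\<not> (\<exists>H\<subset>S. \<forall>\<psi>\<in>{\<gamma>}. ht_models H S \<psi>)"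
        proof
          assume "\<exists>H\<subset>S. \<forall>\<psi>\<in>{\<gamma>}. ht_models H S \<psi>"
          then obtain H where H: "H \<subset> S" "ht_models H S \<gamma>" by auto
          then have "(H \<inter> C, S \<inter> C) \<in> M" using g2[of H S] by auto
          then have "H \<inter> C = S \<inter> C" by (auto simp: M_def)
          then show False using H(1) SC by blast
        qed
      qed
      have "ht_models T T \<beta>" if e: "equilibrium_model (atoms \<gamma> \<union> atoms \<beta>) {\<gamma>} T" for T
      proof -
        have "T \<subseteq> C" using eq_sub[OF e] g1 by blast
        moreover have "ht_models T T \<gamma>" using e unfolding equilibrium_model_def ht_models_set_def by auto
        ultimately have "tsat T \<beta>" using g2[of T T] by (auto simp: M_def Int_absorb2)
        then show ?thesis unfolding ht_models_def hsat_TT by simp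
      qed
      then show ?thesis using eqS unfolding cw_entails_def aS by auto
    qed
    show ?thesis using g1 c1 c2 c3 unfolding C_def by blast
  next
    case False
    have ab: "sem \<alpha> \<beta>"
      using assms(3) False unfolding cw_entails_def aS ht_entails_sem by auto
    define M where "M = {(H \<inter> C, T \<inter> C) | H T. H \<subseteq> T \<and> ht_models H T \<alpha>}"
    have Msub: "\<And>H T. (H, T) \<in> M \<Longrightarrow> H \<subseteq> T \<and> T \<subseteq> C" unfolding M_def by blast
    have Mcl: "\<And>H T. (H, T) \<in> M \<Longrightarrow> (T, T) \<in> M"
    proof -
      fix H T assume "(H, T) \<in> M"
      then obtain H1 T1 where h: "H = H1 \<inter> C" "T = T1 \<inter> C" "H1 \<subseteq> T1" "ht_models H1 T1 \<alpha>"
        unfolding M_def by blast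
      have "ht_models T1 T1 \<alpha>" using h(4) persist[OF h(3)] unfolding ht_models_def hsat_TT by simp
      then show "(T, T) \<in> M" unfolding M_def using h by blast
    qed
    obtain \<gamma> where g1: "atoms \<gamma> \<subseteq> C"
      and g2: "\<And>H' T'. H' \<subseteq> T' \<Longrightarrow> ht_models H' T' \<gamma> = ((H' \<inter> C, T' \<inter> C) \<in> M)"
      using definable[OF fC, of M] Msub Mcl by metis
    have ag: "sem \<alpha> \<gamma>" unfolding sem_def using g2 M_def by blast
    have gb: "sem \<gamma> \<beta>" unfolding sem_def
    proof (intro allI impI)
      fix H T :: "'a set" assume HT: "H \<subseteq> T" and m: "ht_models H T \<gamma>"
      then have "(H \<inter> C, T \<inter> C) \<in> M" using g2 by blast
      then obtain H1 T1 where h: "H \<inter> C = H1 \<inter> C" "T \<inter> C = T1 \<inter> C" "H1 \<subseteq> T1" "ht_models H1 T1 \<alpha>"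
        unfolding M_def by auto
      define H2 where "H2 = (H1 \<inter> atoms \<alpha>) \<union> (H - atoms \<alpha>)"
      define T2 where "T2 = (T1 \<inter> atoms \<alpha>) \<union> (T - atoms \<alpha>)"
      have s2: "H2 \<subseteq> T2" unfolding H2_def T2_def using HT h(3) by blast
      have "ht_models H2 T2 \<alpha>" using loc[of \<alpha> "atoms \<alpha>" H2 H1 T2 T1] h(4)
        unfolding H2_def T2_def by blast
      then have "ht_models H2 T2 \<beta>" using ab s2 unfolding sem_def by blast
      moreover have "H2 \<inter> atoms \<beta> = H \<inter> atoms \<beta>" "T2 \<inter> atoms \<beta> = T \<inter> atoms \<beta>"
        using h(1,2) unfolding H2_def T2_def C_def by blast+
      ultimately show "ht_models H T \<beta>" using loc[of \<beta> "atoms \<beta>" H2 H T2 T] by blast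
    qed
    have c1: "cw_entails {\<alpha>} \<gamma>"
    proof -
      have "\<not> (\<exists>T. equilibrium_model (atoms \<alpha> \<union> atoms \<gamma>) {\<alpha>} T)"
        using False eq_change by blast
      then show ?thesis unfolding cw_entails_def aS ht_entails_sem using ag by auto
    qed
    show ?thesis using g1 c1 sem_conj_negs[OF gb] sem_cw[OF gb] unfolding C_def by blast
  qed
qed

end
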